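(* Let $n\geq 3$ and let $L^B$ be a blow-up of the Boolean lattice $L\cong\mathbf{2}^n$. Then $G^c(L^B)_{SR}$ is connected and $\operatorname{diam}(G^c(L^B)_{SR})\leq 3$.
   Context: Blow-up: keep $0,1$ of $L=\mathbf{2}^n$ and replace every $x\in L\setminus\{0,1\}$ by a finite nonempty chain $C_x$, ordered by the chain order within $C_x$ and, for $a\in C_x,b\in C_y$, $x\neq y$, by $a\leq b$ iff $x\leq y$ in $L$; $0$ least, $1$ greatest. $Z^*(M)$ is the set of nonzero $a$ with $a\wedge b=0$ for some $b\neq0$; $G^c(M)$ has vertex set $Z^*(M)$, distinct $a,b$ adjacent iff $a\wedge b\neq 0$. In a connected graph, $u$ is maximally distant from $v$ if $d(v,w)\leq d(u,v)$ for all neighbours $w$ of $u$; mutually maximally distant means each is maximally distant from the other. $G_{SR}$ has as vertices those $u$ mutually maximally distant from some $v$, distinct vertices adjacent iff mutually maximally distant in $G$. *)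

theory Defs
  imports Main
begin

definition walk :: "'a set \<Rightarrow> ('a \<Rightarrow> 'a \<Rightarrow> bool) \<Rightarrow> 'a list \<Rightarrow> bool" where
  "walk V E xs \<longleftrightarrow> xs \<noteq> [] \<and> set xs \<subseteq> V \<and> (\<forall>i. Suc i < length xs \<longrightarrow> E (xs ! i) (xs ! Suc i))"

definition has_walk :: "'a set \<Rightarrow> ('a \<Rightarrow> 'a \<Rightarrow> bool) \<Rightarrow> 'a \<Rightarrow> 'a \<Rightarrow> nat \<Rightarrow> bool" where
  "has_walk V E u v m \<longleftrightarrow> (\<exists>xs. walk V E xs \<and> hd xs = u \<and> last xs = v \<and> length xs = Suc m)"

definition connected_graph :: "'a set \<Rightarrow> ('a \<Rightarrow> 'a \<Rightarrow> bool) \<Rightarrow> bool" where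
  "connected_graph V E \<longleftrightarrow> V \<noteq> {} \<and> (\<forall>u\<in>V. \<forall>v\<in>V. \<exists>m. has_walk V E u v m)"

text \<open>Distance: length (number of edges) of a shortest walk (meaningful in a connected graph).\<close>
definition gdist :: "'a set \<Rightarrow> ('a \<Rightarrow> 'a \<Rightarrow> bool) \<Rightarrow> 'a \<Rightarrow> 'a \<Rightarrow> nat" where
  "gdist V E u v = (LEAST m. has_walk V E u v m)"

definition max_distant :: "'a set \<Rightarrow> ('a \<Rightarrow> 'a \<Rightarrow> bool) \<Rightarrow> 'a \<Rightarrow> 'a \<Rightarrow> bool" where
  "max_distant V E u v \<longleftrightarrow> u \<in> V \<and> v \<in> V \<and>
     (\<forall>w\<in>V. E u w \<longrightarrow> gdist V E v w \<le> gdist V E u v)"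

definition mutually_max_distant :: "'a set \<Rightarrow> ('a \<Rightarrow> 'a \<Rightarrow> bool) \<Rightarrow> 'a \<Rightarrow> 'a \<Rightarrow> bool" where
  "mutually_max_distant V E u v \<longleftrightarrow> max_distant V E u v \<and> max_distant V E v u"

definition SR_vertices :: "'a set \<Rightarrow> ('a \<Rightarrow> 'a \<Rightarrow> bool) \<Rightarrow> 'a set" where
  "SR_vertices V E = {u\<in>V. \<exists>v\<in>V. mutually_max_distant V E u v}"

definition SR_adj :: "'a set \<Rightarrow> ('a \<Rightarrow> 'a \<Rightarrow> bool) \<Rightarrow> 'a \<Rightarrow> 'a \<Rightarrow> bool" where
  "SR_adj V E u v \<longleftrightarrow> u \<noteq> v \<and> mutually_max_distant V E u v"

definition meet_in :: "'a set \<Rightarrow> ('a \<Rightarrow> 'a \<Rightarrow> bool) \<Rightarrow> 'a \<Rightarrow> 'a \<Rightarrow> 'a" where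
  "meet_in M le a b = (THE m. m \<in> M \<and> le m a \<and> le m b \<and> (\<forall>c\<in>M. le c a \<and> le c b \<longrightarrow> le c m))"

definition Zstar :: "'a set \<Rightarrow> ('a \<Rightarrow> 'a \<Rightarrow> bool) \<Rightarrow> 'a \<Rightarrow> 'a set" where
  "Zstar M le z = {a\<in>M. a \<noteq> z \<and> (\<exists>b\<in>M. b \<noteq> z \<and> meet_in M le a b = z)}"

definition Gc_adj :: "'a set \<Rightarrow> ('a \<Rightarrow> 'a \<Rightarrow> bool) \<Rightarrow> 'a \<Rightarrow> 'a \<Rightarrow> 'a \<Rightarrow> bool" where
  "Gc_adj M le z a b \<longleftrightarrow> a \<noteq> b \<and> meet_in M le a b \<noteq> z"

text \<open>Element x of 2^n other than 0 = {} and 1 = {0..<n} is replaced by the chain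
  Mid x 0 < Mid x 1 < ... < Mid x (k x - 1).\<close>
datatype blow_elem = Bot | Top | Mid "nat set" nat

definition blowup_carrier :: "nat \<Rightarrow> (nat set \<Rightarrow> nat) \<Rightarrow> blow_elem set" where
  "blowup_carrier n k = {Bot, Top} \<union>
     {Mid x i | x i. x \<subseteq> {0..<n} \<and> x \<noteq> {} \<and> x \<noteq> {0..<n} \<and> i < k x}"

fun blowup_le :: "blow_elem \<Rightarrow> blow_elem \<Rightarrow> bool" where
  "blowup_le Bot _ = True"
| "blowup_le _ Top = True"
| "blowup_le (Mid x i) (Mid y j) = (if x = y then i \<le> j else x \<subseteq> y)"
| "blowup_le _ _ = False"

text \<open>A blow-up is valid when every chain is nonempty (finiteness is automatic).\<close>
definition valid_blowup :: "nat \<Rightarrow> (nat set \<Rightarrow> nat) \<Rightarrow> bool" where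
  "valid_blowup n k \<longleftrightarrow> (\<forall>x. x \<subseteq> {0..<n} \<and> x \<noteq> {} \<and> x \<noteq> {0..<n} \<longrightarrow> 1 \<le> k x)"

abbreviation GcV :: "nat \<Rightarrow> (nat set \<Rightarrow> nat) \<Rightarrow> blow_elem set" where
  "GcV n k \<equiv> Zstar (blowup_carrier n k) blowup_le Bot"

abbreviation GcE :: "nat \<Rightarrow> (nat set \<Rightarrow> nat) \<Rightarrow> blow_elem \<Rightarrow> blow_elem \<Rightarrow> bool" where
  "GcE n k \<equiv> Gc_adj (blowup_carrier n k) blowup_le Bot"

end

theory Submission
  imports Defs
begin

lemma blowup_le_antisym: "blowup_le a b \<Longrightarrow> blowup_le b a \<Longrightarrow> a = b"
  by (cases a; cases b) (auto split: if_splits)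

lemma blowup_le_refl: "blowup_le a a" by (cases a) auto

lemma meet_eqI:
  assumes "m \<in> M" "blowup_le m a" "blowup_le m b"
    "\<forall>c\<in>M. blowup_le c a \<and> blowup_le c b \<longrightarrow> blowup_le c m"
  shows "meet_in M blowup_le a b = m"
  unfolding meet_in_def
  apply (rule the_equality)
  using assms apply blast
  using assms blowup_le_antisym by blast

lemma le_Mid_cases: "blowup_le c (Mid x i) \<Longrightarrow> c = Bot \<or> (\<exists>z l. c = Mid z l \<and> z \<subseteq> x \<and> (z = x \<longrightarrow> l \<le> i))"
  by (cases c) (auto split: if_splits)

lemma has_walk0: "u \<in> V \<Longrightarrow> has_walk V E u u 0"
  unfolding has_walk_def walk_def by (rule exI[of _ "[u]"]) auto

lemma has_walk_cons:
  assumes "has_walk V E v w m" "E u v" "u \<in> V"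
  shows "has_walk V E u w (Suc m)"
proof -
  obtain xs where xs: "walk V E xs" "hd xs = v" "last xs = w" "length xs = Suc m"
    using assms(1) unfolding has_walk_def by blast
  have "walk V E (u#xs)"
    unfolding walk_def
  proof (intro conjI allI impI)
    show "u#xs \<noteq> []" by simp
    show "set (u#xs) \<subseteq> V" using xs(1) assms(3) unfolding walk_def by auto
    fix i assume i: "Suc i < length (u#xs)"
    show "E ((u#xs)!i) ((u#xs)! Suc i)"
    proof (cases i)
      case 0 then show ?thesis using xs assms(2) by (cases xs) auto
    next
      case (Suc j) then show ?thesis using xs(1) i unfolding walk_def by auto
    qed
  qed
  moreover have "hd (u#xs) = u" "last (u#xs) = w" "length (u#xs) = Suc (Suc m)"
    using xs by auto
  ultimately show ?thesis unfolding has_walk_def by blast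
qed

lemma has_walk_0D: "has_walk V E u v 0 \<Longrightarrow> u = v"
  unfolding has_walk_def by (auto simp: length_Suc_conv)

lemma has_walk_1D: "has_walk V E u v (Suc 0) \<Longrightarrow> E u v"
proof -
  assume "has_walk V E u v (Suc 0)"
  then obtain xs where xs: "walk V E xs" "hd xs = u" "last xs = v" "length xs = Suc (Suc 0)"
    unfolding has_walk_def by blast
  then obtain a b where ab: "xs = [a,b]" by (auto simp: length_Suc_conv)
  have "E (xs!0) (xs!Suc 0)" using xs(1,4) unfolding walk_def by auto
  then show ?thesis using ab xs by simp
qed

lemma gdist_le: "has_walk V E u v m \<Longrightarrow> gdist V E u v \<le> m"
  unfolding gdist_def by (rule Least_le)

lemma gdist_walk: "has_walk V E u v m \<Longrightarrow> has_walk V E u v (gdist V E u v)"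
  unfolding gdist_def by (rule LeastI)

lemma gdist_0: "u \<in> V \<Longrightarrow> gdist V E u u = 0"
  using gdist_le[OF has_walk0] by fastforce

lemma gdist_1:
  assumes "u \<in> V" "v \<in> V" "E u v" "u \<noteq> v"
  shows "gdist V E u v = 1"
proof -
  have w: "has_walk V E u v (Suc 0)" using has_walk_cons[of V E v v 0 u] has_walk0[of v V E] assms by simp
  have "gdist V E u v \<le> 1" using gdist_le[OF w] by simp
  moreover have "gdist V E u v \<noteq> 0"
  proof
    assume "gdist V E u v = 0"
    then have "has_walk V E u v 0" using gdist_walk[OF w] by simp
    then show False using has_walk_0D[of V E u v] assms(4) by simp
  qed
  ultimately show ?thesis by simp
qed

lemma gdist_2:
  assumes "has_walk V E u v 2" "u \<noteq> v" "\<not> E u v"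
  shows "gdist V E u v = 2"
proof -
  have "gdist V E u v \<le> 2" using gdist_le[OF assms(1)] .
  moreover have "gdist V E u v \<noteq> 0"
  proof
    assume "gdist V E u v = 0"
    then have "has_walk V E u v 0" using gdist_walk[OF assms(1)] by simp
    then show False using has_walk_0D[of V E u v] assms(2) by simp
  qed
  moreover have "gdist V E u v \<noteq> 1"
  proof
    assume "gdist V E u v = 1"
    then have "has_walk V E u v (Suc 0)" using gdist_walk[OF assms(1)] by simp
    then show False using has_walk_1D[of V E u v] assms(3) by simp
  qed
  ultimately show ?thesis by simp
qed

locale BU =
  fixes n :: nat and k :: "nat set \<Rightarrow> nat"
  assumes n3: "3 \<le> n" and vb: "valid_blowup n k"
begin

abbreviation "C \<equiv> blowup_carrier n k"
abbreviation "V \<equiv> GcV n k"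
abbreviation "E \<equiv> GcE n k"

lemma Mid_C: "Mid x i \<in> C \<longleftrightarrow> x \<subseteq> {0..<n} \<and> x \<noteq> {} \<and> x \<noteq> {0..<n} \<and> i < k x"
  by (auto simp: blowup_carrier_def)

lemma Bot_C: "Bot \<in> C" and Top_C: "Top \<in> C"
  by (auto simp: blowup_carrier_def)

lemma k_pos: "x \<subseteq> {0..<n} \<Longrightarrow> x \<noteq> {} \<Longrightarrow> x \<noteq> {0..<n} \<Longrightarrow> 0 < k x"
  using vb by (auto simp: valid_blowup_def)

lemma two_proper: "{a,b} \<noteq> {0..<n}"
proof
  assume "{a,b} = {0..<n}"
  then have "card {a,b} = n" by simp
  moreover have "card {a,b} \<le> 2" by (cases "a = b") auto
  ultimately show False using n3 by simp
qed

lemma one_proper: "{a} \<noteq> {0..<n}"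
  using two_proper[of a a] by simp

lemma C_cases: "c \<in> C \<Longrightarrow> c = Bot \<or> c = Top \<or> (\<exists>z l. c = Mid z l \<and> Mid z l \<in> C)"
  by (auto simp: blowup_carrier_def)

lemma meet_disj:
  assumes "Mid x i \<in> C" "Mid y j \<in> C" "x \<inter> y = {}"
  shows "meet_in C blowup_le (Mid x i) (Mid y j) = Bot"
proof (rule meet_eqI)
  show "\<forall>c\<in>C. blowup_le c (Mid x i) \<and> blowup_le c (Mid y j) \<longrightarrow> blowup_le c Bot"
  proof (intro ballI impI)
    fix c assume c: "c \<in> C" "blowup_le c (Mid x i) \<and> blowup_le c (Mid y j)"
    show "blowup_le c Bot"
    proof -
      from le_Mid_cases[of c x i] c(2) have "c = Bot \<or> (\<exists>z l. c = Mid z l \<and> z \<subseteq> x)" by blast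
      moreover from le_Mid_cases[of c y j] c(2) have "c = Bot \<or> (\<exists>z l. c = Mid z l \<and> z \<subseteq> y)" by blast
      ultimately have "c = Bot \<or> (\<exists>z l. c = Mid z l \<and> z \<subseteq> x \<and> z \<subseteq> y)" by auto
      moreover have "\<not> (c = Mid z l \<and> z \<subseteq> x \<and> z \<subseteq> y)" for z l
      proof
        assume h: "c = Mid z l \<and> z \<subseteq> x \<and> z \<subseteq> y"
        then have "z = {}" using assms(3) by blast
        then show False using h c(1) by (simp add: Mid_C)
      qed
      ultimately show ?thesis by auto
    qed
  qed
qed (auto simp: Bot_C)

lemma meet_nondisj:
  assumes "Mid x i \<in> C" "Mid y j \<in> C" "x \<inter> y \<noteq> {}"
  shows "meet_in C blowup_le (Mid x i) (Mid y j) \<noteq> Bot"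
proof -
  have "\<exists>m. m \<noteq> Bot \<and> m \<in> C \<and> blowup_le m (Mid x i) \<and> blowup_le m (Mid y j) \<and>
     (\<forall>c\<in>C. blowup_le c (Mid x i) \<and> blowup_le c (Mid y j) \<longrightarrow> blowup_le c m)"
  proof (cases "x = y")
    case True
    show ?thesis
    proof (intro exI[of _ "Mid x (min i j)"] conjI ballI impI)
      fix c assume c: "c \<in> C" "blowup_le c (Mid x i) \<and> blowup_le c (Mid y j)"
      from le_Mid_cases[of c x i] c(2) have A: "c = Bot \<or> (\<exists>z l. c = Mid z l \<and> z \<subseteq> x \<and> (z = x \<longrightarrow> l \<le> i))" by blast
      from le_Mid_cases[of c y j] c(2) have B: "c = Bot \<or> (\<exists>z l. c = Mid z l \<and> z \<subseteq> y \<and> (z = y \<longrightarrow> l \<le> j))" by blast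
      from A B True have "c = Bot \<or> (\<exists>z l. c = Mid z l \<and> z \<subseteq> x \<and> (z = x \<longrightarrow> l \<le> i \<and> l \<le> j))" by auto
      then show "blowup_le c (Mid x (min i j))" by (elim disjE exE conjE) (simp_all)
    qed (use assms True in \<open>auto simp: Mid_C\<close>)
  next
    case ne: False
    show ?thesis
    proof (cases "x \<subseteq> y")
      case True
      show ?thesis
      proof (intro exI[of _ "Mid x i"] conjI ballI impI)
        fix c assume c: "c \<in> C" "blowup_le c (Mid x i) \<and> blowup_le c (Mid y j)"
        then show "blowup_le c (Mid x i)" by simp
      qed (use assms True ne in \<open>auto simp: Mid_C\<close>)
    next
      case nxy: False
      show ?thesis
      proof (cases "y \<subseteq> x")
        case True
        show ?thesis
        proof (intro exI[of _ "Mid y j"] conjI ballI impI)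
          fix c assume c: "c \<in> C" "blowup_le c (Mid x i) \<and> blowup_le c (Mid y j)"
          then show "blowup_le c (Mid y j)" by simp
        qed (use assms True ne in \<open>auto simp: Mid_C\<close>)
      next
        case nyx: False
        have kp: "0 < k (x \<inter> y)" using assms nxy by (intro k_pos) (auto simp: Mid_C)
        have mC: "Mid (x \<inter> y) (k (x \<inter> y) - 1) \<in> C" using assms kp nxy by (auto simp: Mid_C)
        show ?thesis
        proof (intro exI[of _ "Mid (x \<inter> y) (k (x \<inter> y) - 1)"] conjI ballI impI)
          fix c assume c: "c \<in> C" "blowup_le c (Mid x i) \<and> blowup_le c (Mid y j)"
          show "blowup_le c (Mid (x \<inter> y) (k (x \<inter> y) - 1))"
          proof -
            consider "c = Bot" | "c = Top" | z l where "c = Mid z l" "Mid z l \<in> C"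
              using C_cases[OF c(1)] by blast
            then show ?thesis
            proof cases
              case 3
              then have "z \<subseteq> x" "z \<subseteq> y" "z \<noteq> x" "z \<noteq> y" using c(2) nxy nyx
                by (auto split: if_splits)
              then show ?thesis using 3 by (auto simp: Mid_C)
            qed (use c in auto)
          qed
        qed (use mC nxy nyx in auto)
      qed
    qed
  qed
  then obtain m where m: "m \<noteq> Bot" "m \<in> C" "blowup_le m (Mid x i)" "blowup_le m (Mid y j)"
     "\<forall>c\<in>C. blowup_le c (Mid x i) \<and> blowup_le c (Mid y j) \<longrightarrow> blowup_le c m" by blast
  then show ?thesis using meet_eqI[OF m(2-5)] by simp
qed

lemma meet_Top: "b \<in> C \<Longrightarrow> meet_in C blowup_le Top b = b"
proof (rule meet_eqI)
  show "blowup_le b Top" by (cases b) auto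
qed (auto simp: blowup_le_refl)


lemma compl_C: "Mid x i \<in> C \<Longrightarrow> Mid ({0..<n} - x) 0 \<in> C"
proof -
  assume h: "Mid x i \<in> C"
  then have x: "x \<subseteq> {0..<n}" "x \<noteq> {}" "x \<noteq> {0..<n}" by (auto simp: Mid_C)
  have a: "{0..<n} - x \<noteq> {}" using x by blast
  have b: "{0..<n} - x \<noteq> {0..<n}" using x by blast
  show ?thesis using k_pos[of "{0..<n} - x"] a b by (auto simp: Mid_C)
qed

lemma V_Mid: "Mid x i \<in> C \<Longrightarrow> Mid x i \<in> V"
  unfolding Zstar_def using compl_C[of x i] meet_disj[of x i "{0..<n}-x" 0] by auto

lemma V_D: "u \<in> V \<Longrightarrow> \<exists>x i. u = Mid x i \<and> Mid x i \<in> C"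
proof -
  assume u: "u \<in> V"
  then have uC: "u \<in> C" "u \<noteq> Bot" and ex: "\<exists>b\<in>C. b \<noteq> Bot \<and> meet_in C blowup_le u b = Bot"
    by (auto simp: Zstar_def)
  have "u \<noteq> Top" using ex meet_Top by auto
  then show ?thesis using C_cases[OF uC(1)] uC(2) by blast
qed

lemma E_Mid: "Mid x i \<in> C \<Longrightarrow> Mid y j \<in> C \<Longrightarrow>
   E (Mid x i) (Mid y j) \<longleftrightarrow> (Mid x i \<noteq> Mid y j \<and> x \<inter> y \<noteq> {})"
  unfolding Gc_adj_def using meet_disj meet_nondisj by blast

lemma walk2:
  assumes u: "Mid x i \<in> C" and v: "Mid y j \<in> C" and d: "x \<inter> y = {}"
  shows "has_walk V E (Mid x i) (Mid y j) 2"
proof -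
  obtain a where a: "a \<in> x" using u by (auto simp: Mid_C)
  obtain b where b: "b \<in> y" using v by (auto simp: Mid_C)
  have ab: "{a,b} \<subseteq> {0..<n}" using a b u v by (auto simp: Mid_C)
  have wC: "Mid {a,b} 0 \<in> C" using k_pos[of "{a,b}"] ab two_proper[of a b] by (auto simp: Mid_C)
  have e1: "E (Mid x i) (Mid {a,b} 0)" using E_Mid[OF u wC] a b d by auto
  have e2: "E (Mid {a,b} 0) (Mid y j)" using E_Mid[OF wC v] a b d by auto
  have "has_walk V E (Mid y j) (Mid y j) 0" using has_walk0 V_Mid[OF v] .
  then have "has_walk V E (Mid {a,b} 0) (Mid y j) (Suc 0)"
    using has_walk_cons[of V E "Mid y j" "Mid y j" 0 "Mid {a,b} 0"] e2 V_Mid[OF wC] by simp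
  then have "has_walk V E (Mid x i) (Mid y j) (Suc (Suc 0))"
    using has_walk_cons[of V E "Mid {a,b} 0" "Mid y j" "Suc 0" "Mid x i"] e1 V_Mid[OF u] by simp
  then show ?thesis by (simp add: numeral_2_eq_2)
qed

lemma gd_adj: "u \<in> V \<Longrightarrow> v \<in> V \<Longrightarrow> E u v \<Longrightarrow> gdist V E u v = 1"
  using gdist_1[of u V v E] by (auto simp: Gc_adj_def)

lemma gd_le2: assumes "u \<in> V" "v \<in> V" shows "gdist V E u v \<le> 2"
proof -
  obtain x i where u: "u = Mid x i" "Mid x i \<in> C" using V_D[OF assms(1)] by blast
  obtain y j where v: "v = Mid y j" "Mid y j \<in> C" using V_D[OF assms(2)] by blast
  show ?thesis
  proof (cases "u = v")
    case True then show ?thesis using gdist_0[OF assms(1)] by simp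
  next
    case False
    show ?thesis
    proof (cases "x \<inter> y = {}")
      case True then show ?thesis using gdist_le[OF walk2[OF u(2) v(2)]] u v by simp
    next
      case F: False
      then have "E u v" using E_Mid[OF u(2) v(2)] False u v by simp
      then show ?thesis using gd_adj assms by simp
    qed
  qed
qed

lemma gd_disj:
  assumes u: "Mid x i \<in> C" and v: "Mid y j \<in> C" and d: "x \<inter> y = {}"
  shows "gdist V E (Mid x i) (Mid y j) = 2"
proof (rule gdist_2[OF walk2[OF u v d]])
  show "Mid x i \<noteq> Mid y j" using u d by (auto simp: Mid_C)
  show "\<not> E (Mid x i) (Mid y j)" using E_Mid[OF u v] d by simp
qed

lemma md_disj:
  assumes u: "Mid x i \<in> C" and v: "Mid y j \<in> C" and d: "x \<inter> y = {}"
  shows "max_distant V E (Mid x i) (Mid y j)"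
  unfolding max_distant_def using gd_le2 gd_disj[OF u v d] V_Mid[OF u] V_Mid[OF v] by auto

lemma md_same:
  assumes u: "Mid x i \<in> C" and v: "Mid x j \<in> C" and ij: "i \<noteq> j"
  shows "max_distant V E (Mid x i) (Mid x j)"
  unfolding max_distant_def
proof (intro conjI ballI impI)
  show "Mid x i \<in> V" "Mid x j \<in> V" using V_Mid u v by auto
  have ne: "x \<noteq> {}" using u by (simp add: Mid_C)
  have g1: "gdist V E (Mid x i) (Mid x j) = 1"
    using gd_adj V_Mid u v E_Mid[OF u v] ij ne by simp
  fix w assume w: "w \<in> V" "E (Mid x i) w"
  obtain z l where z: "w = Mid z l" "Mid z l \<in> C" using V_D[OF w(1)] by blast
  show "gdist V E (Mid x j) w \<le> gdist V E (Mid x i) (Mid x j)"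
  proof (cases "w = Mid x j")
    case True then show ?thesis using gdist_0[of "Mid x j" V E] w(1) g1 by simp
  next
    case False
    have "z \<inter> x \<noteq> {}" using E_Mid[OF u z(2)] w(2) z(1) by auto
    then have "E (Mid x j) w" using E_Mid[OF v z(2)] False z(1) by auto
    then show ?thesis using gd_adj V_Mid v w(1) g1 by simp
  qed
qed

lemma not_md:
  assumes u: "Mid x i \<in> C" and v: "Mid y j \<in> C" and xy: "x \<inter> y \<noteq> {}" and a: "a \<in> x" "a \<notin> y"
  shows "\<not> max_distant V E (Mid x i) (Mid y j)"
proof
  assume md: "max_distant V E (Mid x i) (Mid y j)"
  have an: "a < n" using u a by (auto simp: Mid_C)
  have wC: "Mid {a} 0 \<in> C" using k_pos[of "{a}"] an one_proper[of a] by (auto simp: Mid_C)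
  have "x \<noteq> {a}" using xy a by auto
  then have e: "E (Mid x i) (Mid {a} 0)" using E_Mid[OF u wC] a by auto
  have "gdist V E (Mid y j) (Mid {a} 0) = 2" using gd_disj[OF v wC] a by auto
  moreover have "E (Mid x i) (Mid y j)" using E_Mid[OF u v] xy a by auto
  then have "gdist V E (Mid x i) (Mid y j) = 1" using gd_adj V_Mid u v by simp
  ultimately show False using md e V_Mid[OF wC] unfolding max_distant_def by fastforce
qed

lemma not_md_self:
  assumes u: "Mid x i \<in> C"
  shows "\<not> max_distant V E (Mid x i) (Mid x i)"
proof
  assume md: "max_distant V E (Mid x i) (Mid x i)"
  obtain a where a: "a \<in> x" using u by (auto simp: Mid_C)
  have an: "a < n" using u a by (auto simp: Mid_C)
  obtain z where z: "z \<subseteq> {0..<n}" "z \<noteq> {}" "z \<noteq> {0..<n}" "z \<noteq> x" "z \<inter> x \<noteq> {}"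
  proof (cases "x = {a}")
    case True
    define b where "b = (if a = 0 then 1 else (0::nat))"
    have "b < n" "b \<noteq> a" using n3 by (auto simp: b_def)
    then show ?thesis using that[of "{a,b}"] an two_proper[of a b] True a by auto
  next
    case False
    then show ?thesis using that[of "{a}"] an one_proper[of a] a by auto
  qed
  have wC: "Mid z 0 \<in> C" using k_pos[of z] z by (auto simp: Mid_C)
  have e: "E (Mid x i) (Mid z 0)" using E_Mid[OF u wC] z by auto
  have "gdist V E (Mid x i) (Mid z 0) = 1" using gd_adj V_Mid u wC e by simp
  moreover have "gdist V E (Mid x i) (Mid x i) = 0" using gdist_0[of "Mid x i" V E] V_Mid u by simp
  ultimately show False using md e V_Mid[OF wC] unfolding max_distant_def by fastforce
qed

lemma mmd_iff:
  assumes u: "Mid x i \<in> C" and v: "Mid y j \<in> C"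
  shows "mutually_max_distant V E (Mid x i) (Mid y j) \<longleftrightarrow> (x \<inter> y = {} \<or> (x = y \<and> i \<noteq> j))"
proof
  assume "x \<inter> y = {} \<or> (x = y \<and> i \<noteq> j)"
  then show "mutually_max_distant V E (Mid x i) (Mid y j)"
  proof
    assume d: "x \<inter> y = {}"
    then have d': "y \<inter> x = {}" by blast
    show ?thesis unfolding mutually_max_distant_def using md_disj[OF u v d] md_disj[OF v u d'] by simp
  next
    assume h: "x = y \<and> i \<noteq> j"
    then show ?thesis unfolding mutually_max_distant_def using md_same u v by auto
  qed
next
  assume m: "mutually_max_distant V E (Mid x i) (Mid y j)"
  show "x \<inter> y = {} \<or> (x = y \<and> i \<noteq> j)"
  proof (rule ccontr)
    assume c: "\<not> (x \<inter> y = {} \<or> (x = y \<and> i \<noteq> j))"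
    show False
    proof (cases "x = y")
      case True
      then have "i = j" using c by simp
      then show False using m not_md_self u True unfolding mutually_max_distant_def by simp
    next
      case False
      then consider a where "a \<in> x" "a \<notin> y" | a where "a \<in> y" "a \<notin> x" by blast
      then show False
      proof cases
        case 1 then show False using not_md[OF u v] c m unfolding mutually_max_distant_def by blast
      next
        case 2
        have "y \<inter> x \<noteq> {}" using c by blast
        then show False using not_md[OF v u] 2 m unfolding mutually_max_distant_def by blast
      qed
    qed
  qed
qed

lemma SR_V: "SR_vertices V E = V"
proof
  show "SR_vertices V E \<subseteq> V" unfolding SR_vertices_def by auto
  show "V \<subseteq> SR_vertices V E"
  proof
    fix u assume uV: "u \<in> V"
    obtain x i where u: "u = Mid x i" "Mid x i \<in> C" using V_D[OF uV] by blast
    have cC: "Mid ({0..<n} - x) 0 \<in> C" using compl_C[OF u(2)] .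
    have "mutually_max_distant V E u (Mid ({0..<n} - x) 0)" using mmd_iff[OF u(2) cC] u(1) by auto
    then show "u \<in> SR_vertices V E" unfolding SR_vertices_def using uV V_Mid[OF cC] by blast
  qed
qed

lemma SR_disj:
  assumes u: "Mid x i \<in> C" and v: "Mid y j \<in> C" and d: "x \<inter> y = {}"
  shows "SR_adj V E (Mid x i) (Mid y j)"
  unfolding SR_adj_def using mmd_iff[OF u v] d u by (auto simp: Mid_C)

lemma walk3:
  assumes uV: "u \<in> V" and vV: "v \<in> V"
  shows "\<exists>m\<le>3. has_walk V (SR_adj V E) u v m"
proof -
  let ?G = "SR_adj V E"
  obtain x i where u: "u = Mid x i" "Mid x i \<in> C" using V_D[OF uV] by blast
  obtain y j where v: "v = Mid y j" "Mid y j \<in> C" using V_D[OF vV] by blast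
  have w0: "has_walk V ?G v v 0" using has_walk0 vV .
  show ?thesis
  proof (cases "u = v")
    case True then show ?thesis using w0 by auto
  next
    case uv: False
    show ?thesis
    proof (cases "?G u v")
      case True
      then have "has_walk V ?G u v (Suc 0)" using has_walk_cons[of V ?G v v 0 u] w0 uV by simp
      then show ?thesis by (intro exI[of _ "Suc 0"]) simp
    next
      case nadj: False
      then have xy: "x \<inter> y \<noteq> {}" using SR_disj u v by blast
      have xney: "x \<noteq> y"
      proof
        assume "x = y"
        then have "i \<noteq> j" using uv u v by auto
        then have "?G u v" using mmd_iff[OF u(2) v(2)] uv u v \<open>x = y\<close> unfolding SR_adj_def by simp
        then show False using nadj by simp
      qed
      show ?thesis
      proof (cases "x \<union> y = {0..<n}")
        case False
        define z where "z = {0..<n} - (x \<union> y)"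
        have zC: "Mid z 0 \<in> C" using k_pos[of z] False u(2) v(2) xy unfolding z_def by (auto simp: Mid_C)
        have a1: "?G u (Mid z 0)" using SR_disj[OF u(2) zC] u unfolding z_def by auto
        have a2: "?G (Mid z 0) v" using SR_disj[OF zC v(2)] v unfolding z_def by auto
        have "has_walk V ?G (Mid z 0) v (Suc 0)"
          using has_walk_cons[of V ?G v v 0 "Mid z 0"] w0 a2 V_Mid[OF zC] by simp
        then have "has_walk V ?G u v (Suc (Suc 0))"
          using has_walk_cons[of V ?G "Mid z 0" v "Suc 0" u] a1 uV by simp
        then show ?thesis by (intro exI[of _ "Suc (Suc 0)"]) simp
      next
        case True
        have aC: "Mid ({0..<n} - x) 0 \<in> C" using compl_C[OF u(2)] .
        have bC: "Mid ({0..<n} - y) 0 \<in> C" using compl_C[OF v(2)] .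
        have a1: "?G u (Mid ({0..<n} - x) 0)" using SR_disj[OF u(2) aC] u by auto
        have a2: "?G (Mid ({0..<n} - x) 0) (Mid ({0..<n} - y) 0)" using SR_disj[OF aC bC] True by auto
        have a3: "?G (Mid ({0..<n} - y) 0) v" using SR_disj[OF bC v(2)] v by auto
        have "has_walk V ?G (Mid ({0..<n} - y) 0) v (Suc 0)"
          using has_walk_cons[of V ?G v v 0 "Mid ({0..<n} - y) 0"] w0 a3 V_Mid[OF bC] by simp
        then have "has_walk V ?G (Mid ({0..<n} - x) 0) v (Suc (Suc 0))"
          using has_walk_cons[of V ?G "Mid ({0..<n} - y) 0" v "Suc 0" "Mid ({0..<n} - x) 0"] a2 V_Mid[OF aC] by simp
        then have "has_walk V ?G u v (Suc (Suc (Suc 0)))"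
          using has_walk_cons[of V ?G "Mid ({0..<n} - x) 0" v "Suc (Suc 0)" u] a1 uV by simp
        then show ?thesis by (intro exI[of _ "Suc (Suc (Suc 0))"]) simp
      qed
    qed
  qed
qed

lemma main:
  "connected_graph (SR_vertices V E) (SR_adj V E)
   \<and> (\<forall>u\<in>SR_vertices V E. \<forall>v\<in>SR_vertices V E. gdist (SR_vertices V E) (SR_adj V E) u v \<le> 3)"
proof -
  have ne: "V \<noteq> {}"
  proof -
    have "Mid {0} 0 \<in> C" using k_pos[of "{0}"] n3 one_proper[of 0] by (auto simp: Mid_C)
    then show ?thesis using V_Mid by blast
  qed
  show ?thesis unfolding SR_V connected_graph_def
    using ne walk3 gdist_le by (meson order_trans)
qed

end

theorem lemma3p18:
  fixes n :: nat and k :: "nat set \<Rightarrow> nat"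
  assumes "n \<ge> 3" and "valid_blowup n k"
  shows "connected_graph (SR_vertices (GcV n k) (GcE n k)) (SR_adj (GcV n k) (GcE n k))
       \<and> (\<forall>u\<in>SR_vertices (GcV n k) (GcE n k). \<forall>v\<in>SR_vertices (GcV n k) (GcE n k).
            gdist (SR_vertices (GcV n k) (GcE n k)) (SR_adj (GcV n k) (GcE n k)) u v \<le> 3)"
proof -
  interpret BU n k using assms by unfold_locales
  show ?thesis using main .
qed

end
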